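(* An $AB\bar B$-formula $\varphi$ is satisfied by some infinite interval structure if and only if it is featured by some periodic $\varphi$-compass structure with threshold $\tilde y_0<2^{2^{7|\varphi|}}$ and period $\tilde y<2|\varphi|\cdot 2^{2^{7|\varphi|}}\cdot 2^{2^{7|\varphi|}}$.
   Context: Syntax: $AB\bar B$-formulas are built from a set $\mathcal{P}$ of propositional variables using $\neg$, $\vee$ and unary modalities $\langle A\rangle,\langle B\rangle,\langle\bar B\rangle$ ($[R]\psi=\neg\langle R\rangle\neg\psi$); $|\varphi|$ is the size (number of subformulas) of $\varphi$. Semantics: an ordinal $N\le\omega$ is identified with $\{0,\dots,N-1\}$ ($\mathbb{N}$ if $N=\omega$); $\mathbb{I}_N$ is the set of intervals $[x,y]$ with $x,y\in N$, $x<y$. $[x,y]\,A\,[x',y']$ iff $y=x'$; $[x,y]\,B\,[x',y']$ iff $x=x'$ and $y'<y$; $[x,y]\,\bar B\,[x',y']$ iff $x=x'$ and $y<y'$. An interval structure $\mathcal{S}=(\mathbb{I}_N,A,B,\bar B,\sigma)$ has $\sigma:\mathbb{I}_N\to\mathcal{P}(\mathcal{P})$; it is infinite if $N=\omega$. $\mathcal{S},I\models p$ iff $p\in\sigma(I)$; booleans as usual; $\mathcal{S},I\models\langle R\rangle\psi$ iff some $J$ with $I\,R\,J$ has $\mathcal{S},J\models\psi$. $\mathcal{S}$ satisfies $\varphi$ if $\mathcal{S},I\models\varphi$ for some $I$. Atoms: $Cl(\varphi)$ is the set of subformulas of $\varphi$ and their negations (identifying $\neg\neg\alpha$ with $\alpha$,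 $\neg\langle R\rangle\alpha$ with $[R]\neg\alpha$); $Cl^+(\varphi)$ adds all $\langle R\rangle\alpha$, $\neg\langle R\rangle\alpha$ for $R\in\{A,B,\bar B\}$, $\alpha\in Cl(\varphi)$. A $\varphi$-atom is a nonempty $F\subseteq Cl^+(\varphi)$ with: $\alpha\in F$ iff $\neg\alpha\notin F$ for all $\alpha\in Cl^+(\varphi)$, and $\alpha\vee\beta\in F$ iff $\alpha\in F$ or $\beta\in F$. $obs(F)=\{\alpha\in Cl(\varphi):\alpha\in F\}$, $Req_R(F)=\{\alpha\in Cl(\varphi):\langle R\rangle\alpha\in F\}$. $F\leadsto_A G$ iff $Req_A(F)=obs(G)\cup Req_B(G)\cup Req_{\bar B}(G)$; $F\leadsto_B G$ iff $obs(F)\cup Req_{\bar B}(F)\subseteq Req_{\bar B}(G)\subseteq obs(F)\cup Req_{\bar B}(F)\cup Req_B(F)$ and $obs(G)\cup Req_B(G)\subseteq Req_B(F)\subseteq obs(G)\cup Req_B(G)\cup Req_{\bar B}(G)$. Compass structures: $\mathbb{P}_N=\{(x,y):0\le x<y<N\}$ with relations $A,B,\bar B$ as for the intervals $[x,y]$. A $\varphi$-compass structure of length $N$ is $(\mathbb{P}_N,\mathcal{L})$, $\mathcal{L}$ mapping points to $\varphi$-atoms, such that $p\,R\,q$ implies $\mathcal{L}(p)\leadsto_R\mathcal{L}(q)$ for $R\in\{A,B\}$ (consistency), and for every $p$, $R\in\{A,B,\bar B\}$, $\alpha\in Req_R(\mathcal{L}(p))$ there is $q$ with $p\,R\,q$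 and $\alpha\in obs(\mathcal{L}(q))$ (fulfillment). It features $\alpha$ if $\alpha\in\mathcal{L}(p)$ for some $p$. Periodicity: an infinite compass structure $(\mathbb{P}_\omega,\mathcal{L})$ is periodic with threshold $\tilde y_0$, period $\tilde y$ and binding $\tilde g:\{0,\dots,\tilde y_0+\tilde y-1\}\to\{0,\dots,\tilde y_0-1\}$ if (i) for all $\tilde y_0+\tilde y\le x<y$, $\mathcal{L}(x,y)=\mathcal{L}(x-\tilde y,y-\tilde y)$, and (ii) for all $0\le x<\tilde y_0+\tilde y\le y$, $\mathcal{L}(x,y)=\mathcal{L}(\tilde g(x),y-\tilde y)$. *)

theory Defs
  imports Main
begin

datatype rel = RA | RB | RBbar

datatype 'p fml = Var 'p | Neg "'p fml" | Or "'p fml" "'p fml" | Dia rel "'p fml"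

fun subfs :: "'p fml \<Rightarrow> 'p fml set" where
  "subfs (Var p) = {Var p}"
| "subfs (Neg a) = insert (Neg a) (subfs a)"
| "subfs (Or a b) = insert (Or a b) (subfs a \<union> subfs b)"
| "subfs (Dia r a) = insert (Dia r a) (subfs a)"

definition fsize :: "'p fml \<Rightarrow> nat" where
  "fsize \<phi> = card (subfs \<phi>)"

(* negation modulo the identification of \<not>\<not>\<alpha> with \<alpha> *)
fun neg :: "'p fml \<Rightarrow> 'p fml" where
  "neg (Neg a) = a"
| "neg a = Neg a"

(* interval relations on pairs (x,y), x<y *)
fun irel :: "rel \<Rightarrow> nat \<times> nat \<Rightarrow> nat \<times> nat \<Rightarrow> bool" where
  "irel RA (x, y) (x', y') \<longleftrightarrow> y = x'"
| "irel RB (x, y) (x', y') \<longleftrightarrow> x = x' \<and> y' < y"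
| "irel RBbar (x, y) (x', y') \<longleftrightarrow> x = x' \<and> y < y'"

definition is_point :: "nat \<times> nat \<Rightarrow> bool" where
  "is_point p \<longleftrightarrow> fst p < snd p"

(* semantics over the infinite interval structure on \<nat>, labelling \<sigma> *)
fun holds :: "(nat \<times> nat \<Rightarrow> 'p set) \<Rightarrow> nat \<times> nat \<Rightarrow> 'p fml \<Rightarrow> bool" where
  "holds \<sigma> I (Var p) \<longleftrightarrow> p \<in> \<sigma> I"
| "holds \<sigma> I (Neg a) \<longleftrightarrow> \<not> holds \<sigma> I a"
| "holds \<sigma> I (Or a b) \<longleftrightarrow> holds \<sigma> I a \<or> holds \<sigma> I b"
| "holds \<sigma> I (Dia r a) \<longleftrightarrow> (\<exists>J. is_point J \<and> irel r I J \<and> holds \<sigma> J a)"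

definition inf_satisfiable :: "'p fml \<Rightarrow> bool" where
  "inf_satisfiable \<phi> \<longleftrightarrow> (\<exists>\<sigma> I. is_point I \<and> holds \<sigma> I \<phi>)"

definition Cl :: "'p fml \<Rightarrow> 'p fml set" where
  "Cl \<phi> = subfs \<phi> \<union> neg ` subfs \<phi>"

definition ClPlus :: "'p fml \<Rightarrow> 'p fml set" where
  "ClPlus \<phi> = Cl \<phi> \<union> {Dia r a | r a. a \<in> Cl \<phi>} \<union> {neg (Dia r a) | r a. a \<in> Cl \<phi>}"

definition is_atom :: "'p fml \<Rightarrow> 'p fml set \<Rightarrow> bool" where
  "is_atom \<phi> F \<longleftrightarrow> F \<noteq> {} \<and> F \<subseteq> ClPlus \<phi>
     \<and> (\<forall>a \<in> ClPlus \<phi>. a \<in> F \<longleftrightarrow> neg a \<notin> F)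
     \<and> (\<forall>a b. Or a b \<in> ClPlus \<phi> \<longrightarrow> (Or a b \<in> F \<longleftrightarrow> a \<in> F \<or> b \<in> F))"

definition obs :: "'p fml \<Rightarrow> 'p fml set \<Rightarrow> 'p fml set" where
  "obs \<phi> F = {a \<in> Cl \<phi>. a \<in> F}"

definition Req :: "'p fml \<Rightarrow> rel \<Rightarrow> 'p fml set \<Rightarrow> 'p fml set" where
  "Req \<phi> r F = {a \<in> Cl \<phi>. Dia r a \<in> F}"

definition leadsA :: "'p fml \<Rightarrow> 'p fml set \<Rightarrow> 'p fml set \<Rightarrow> bool" where
  "leadsA \<phi> F G \<longleftrightarrow> Req \<phi> RA F = obs \<phi> G \<union> Req \<phi> RB G \<union> Req \<phi> RBbar G"

definition leadsB :: "'p fml \<Rightarrow> 'p fml set \<Rightarrow> 'p fml set \<Rightarrow> bool" where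
  "leadsB \<phi> F G \<longleftrightarrow>
     obs \<phi> F \<union> Req \<phi> RBbar F \<subseteq> Req \<phi> RBbar G
   \<and> Req \<phi> RBbar G \<subseteq> obs \<phi> F \<union> Req \<phi> RBbar F \<union> Req \<phi> RB F
   \<and> obs \<phi> G \<union> Req \<phi> RB G \<subseteq> Req \<phi> RB F
   \<and> Req \<phi> RB F \<subseteq> obs \<phi> G \<union> Req \<phi> RB G \<union> Req \<phi> RBbar G"

definition inf_compass :: "'p fml \<Rightarrow> (nat \<times> nat \<Rightarrow> 'p fml set) \<Rightarrow> bool" where
  "inf_compass \<phi> L \<longleftrightarrow>
     (\<forall>p. is_point p \<longrightarrow> is_atom \<phi> (L p))
   \<and> (\<forall>p q. is_point p \<and> is_point q \<and> irel RA p q \<longrightarrow> leadsA \<phi> (L p) (L q))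
   \<and> (\<forall>p q. is_point p \<and> is_point q \<and> irel RB p q \<longrightarrow> leadsB \<phi> (L p) (L q))
   \<and> (\<forall>p r a. is_point p \<and> a \<in> Req \<phi> r (L p) \<longrightarrow>
        (\<exists>q. is_point q \<and> irel r p q \<and> a \<in> obs \<phi> (L q)))"

definition features :: "(nat \<times> nat \<Rightarrow> 'p fml set) \<Rightarrow> 'p fml \<Rightarrow> bool" where
  "features L a \<longleftrightarrow> (\<exists>p. is_point p \<and> a \<in> L p)"

definition periodic :: "(nat \<times> nat \<Rightarrow> 'p fml set) \<Rightarrow> nat \<Rightarrow> nat \<Rightarrow> (nat \<Rightarrow> nat) \<Rightarrow> bool" where
  "periodic L y0 yp g \<longleftrightarrow>
     (\<forall>x < y0 + yp. g x < y0)
   \<and> (\<forall>x y. y0 + yp \<le> x \<and> x < y \<longrightarrow> L (x, y) = L (x - yp, y - yp))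
   \<and> (\<forall>x y. x < y0 + yp \<and> y0 + yp \<le> y \<longrightarrow> L (x, y) = L (g x, y - yp))"

end

theory Submission
  imports Defs
begin

lemma finite_subfs[simp]: "finite (subfs a)"
  by (induction a) auto

lemma self_subfs[simp]: "a \<in> subfs a"
  by (cases a) auto

lemma subfs_trans: "b \<in> subfs a \<Longrightarrow> subfs b \<subseteq> subfs a"
  by (induction a) auto

lemma Neg_subfs: "Neg c \<in> subfs a \<Longrightarrow> c \<in> subfs a"
  using subfs_trans[of "Neg c" a] by auto
lemma Or_subfs: "Or b c \<in> subfs a \<Longrightarrow> b \<in> subfs a \<and> c \<in> subfs a"
  using subfs_trans[of "Or b c" a] by auto
lemma Dia_subfs: "Dia r c \<in> subfs a \<Longrightarrow> c \<in> subfs a"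
  using subfs_trans[of "Dia r c" a] by auto

lemma holds_neg[simp]: "holds \<sigma> I (neg a) \<longleftrightarrow> \<not> holds \<sigma> I a"
  by (cases a) auto

lemma subfs_Cl: "subfs \<phi> \<subseteq> Cl \<phi>" unfolding Cl_def by auto
lemma Cl_ClPlus: "Cl \<phi> \<subseteq> ClPlus \<phi>" unfolding ClPlus_def by auto

lemma neg_Cl: "e \<in> Cl \<phi> \<Longrightarrow> neg e \<in> Cl \<phi>"
proof -
  assume "e \<in> Cl \<phi>"
  then consider "e \<in> subfs \<phi>" | s where "e = neg s" "s \<in> subfs \<phi>" unfolding Cl_def by blast
  then show ?thesis
  proof cases
    case 1 then show ?thesis unfolding Cl_def by blast
  next
    case 2
    show ?thesis
    proof (cases "\<exists>c. s = Neg c")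
      case True
      then obtain c where "s = Neg c" by blast
      with 2 have "e = c" "c \<in> subfs \<phi>" using Neg_subfs by auto
      then show ?thesis unfolding Cl_def by blast
    next
      case False
      then have "neg s = Neg s" by (cases s) auto
      with 2 have "neg e = s" by simp
      then show ?thesis using 2 unfolding Cl_def by blast
    qed
  qed
qed

lemma neg_ClPlus: "e \<in> ClPlus \<phi> \<Longrightarrow> neg e \<in> ClPlus \<phi>"
  unfolding ClPlus_def using neg_Cl[of e \<phi>] by auto

lemma Or_ClPlus: "Or a b \<in> ClPlus \<phi> \<Longrightarrow> Or a b \<in> subfs \<phi>"
  unfolding ClPlus_def Cl_def
proof (elim UnE imageE CollectE exE conjE)
  fix s assume "Or a b = neg s" "s \<in> subfs \<phi>"
  then show ?thesis by (cases s) (auto dest: Neg_subfs)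
qed auto

lemma truth_lemma:
  assumes C: "inf_compass \<phi> L"
  shows "a \<in> subfs \<phi> \<Longrightarrow> is_point I \<Longrightarrow> holds (\<lambda>p. {v. Var v \<in> L p}) I a \<longleftrightarrow> a \<in> L I"
proof (induction a arbitrary: I)
  case (Var x)
  then show ?case by simp
next
  case (Neg a)
  have "a \<in> subfs \<phi>" using Neg.prems Neg_subfs by blast
  moreover have "Neg a \<in> ClPlus \<phi>" using Neg.prems subfs_Cl Cl_ClPlus by blast
  moreover have "is_atom \<phi> (L I)" using C Neg.prems unfolding inf_compass_def by blast
  ultimately have "Neg a \<in> L I \<longleftrightarrow> a \<notin> L I" unfolding is_atom_def by (metis neg.simps(1))
  then show ?case using Neg.IH Neg.prems \<open>a \<in> subfs \<phi>\<close> by simp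
next
  case (Or a b)
  have "a \<in> subfs \<phi>" "b \<in> subfs \<phi>" using Or.prems Or_subfs by blast+
  moreover have "Or a b \<in> ClPlus \<phi>" using Or.prems subfs_Cl Cl_ClPlus by blast
  moreover have "is_atom \<phi> (L I)" using C Or.prems unfolding inf_compass_def by blast
  ultimately have "Or a b \<in> L I \<longleftrightarrow> a \<in> L I \<or> b \<in> L I" unfolding is_atom_def by blast
  then show ?case using Or.IH Or.prems \<open>a \<in> subfs \<phi>\<close> \<open>b \<in> subfs \<phi>\<close> by simp
next
  case (Dia r a)
  have sa: "a \<in> subfs \<phi>" using Dia.prems Dia_subfs by blast
  hence aCl: "a \<in> Cl \<phi>" using subfs_Cl by blast
  show ?case
  proof
    assume "holds (\<lambda>p. {v. Var v \<in> L p}) I (Dia r a)"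
    then obtain J where J: "is_point J" "irel r I J" "holds (\<lambda>p. {v. Var v \<in> L p}) J a" by auto
    hence aJ: "a \<in> L J" using Dia.IH sa by blast
    obtain x y where I: "I = (x,y)" by fastforce
    obtain x' y' where J': "J = (x',y')" by fastforce
    show "Dia r a \<in> L I"
    proof (cases r)
      case RA
      then have "leadsA \<phi> (L I) (L J)" using C Dia.prems J unfolding inf_compass_def by blast
      then show ?thesis using aJ aCl RA unfolding leadsA_def obs_def Req_def by blast
    next
      case RB
      then have "leadsB \<phi> (L I) (L J)" using C Dia.prems J unfolding inf_compass_def by blast
      then show ?thesis using aJ aCl RB unfolding leadsB_def obs_def Req_def by blast
    next
      case RBbar
      then have "irel RB J I" using J I J' by auto
      then have "leadsB \<phi> (L J) (L I)" using C Dia.prems J unfolding inf_compass_def by blast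
      then show ?thesis using aJ aCl RBbar unfolding leadsB_def obs_def Req_def by blast
    qed
  next
    assume "Dia r a \<in> L I"
    hence "a \<in> Req \<phi> r (L I)" using aCl unfolding Req_def by blast
    then obtain q where q: "is_point q" "irel r I q" "a \<in> obs \<phi> (L q)"
      using C Dia.prems unfolding inf_compass_def by blast
    then have "holds (\<lambda>p. {v. Var v \<in> L p}) q a" using Dia.IH[OF sa q(1)] unfolding obs_def by blast
    then show "holds (\<lambda>p. {v. Var v \<in> L p}) I (Dia r a)"
      using q by (simp only: holds.simps) blast
  qed
qed

lemma compass_to_sat:
  assumes "inf_compass \<phi> L" "features L \<phi>"
  shows "inf_satisfiable \<phi>"
proof -
  obtain p where "is_point p" "\<phi> \<in> L p" using assms(2) unfolding features_def by blast
  then show ?thesis using truth_lemma[OF assms(1) self_subfs] unfolding inf_satisfiable_def by blast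
qed

lemma holds_shift:
  "holds (\<lambda>p. \<sigma> (fst p + k, snd p + k)) (x,y) a \<longleftrightarrow> holds \<sigma> (x+k, y+k) a"
proof (induction a arbitrary: x y)
  case (Dia r a)
  let ?s = "\<lambda>p. \<sigma> (fst p + k, snd p + k)"
  show ?case
  proof
    assume "holds ?s (x,y) (Dia r a)"
    then obtain J where J: "is_point J" "irel r (x,y) J" "holds ?s J a" by auto
    obtain u v where uv: "J = (u,v)" by fastforce
    have "holds \<sigma> (u+k, v+k) a" using Dia.IH J uv by simp
    moreover have "irel r (x+k,y+k) (u+k,v+k)" using J(2) uv by (cases r) auto
    moreover have "is_point (u+k,v+k)" using J(1) uv by (simp add: is_point_def)
    ultimately show "holds \<sigma> (x+k,y+k) (Dia r a)" by (simp only: holds.simps) blast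
  next
    assume "holds \<sigma> (x+k,y+k) (Dia r a)"
    then obtain J where J: "is_point J" "irel r (x+k,y+k) J" "holds \<sigma> J a" by auto
    obtain u v where uv: "J = (u,v)" by fastforce
    have ku: "k \<le> u" "k \<le> v" using J(1,2) uv by (cases r; auto simp: is_point_def)+
    define u' v' where "u' = u - k" "v' = v - k"
    have e: "u = u' + k" "v = v' + k" using ku u'_v'_def by auto
    have "holds ?s (u',v') a" using Dia.IH J uv e by simp
    moreover have "irel r (x,y) (u',v')" using J(2) uv e by (cases r) auto
    moreover have "is_point (u',v')" using J(1) uv e by (simp add: is_point_def)
    ultimately show "holds ?s (x,y) (Dia r a)" by (simp only: holds.simps) blast
  qed
qed auto

definition H :: "(nat \<times> nat \<Rightarrow> 'p set) \<Rightarrow> 'p fml \<Rightarrow> nat \<times> nat \<Rightarrow> 'p fml set" where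
  "H \<sigma> \<phi> p = {a \<in> ClPlus \<phi>. holds \<sigma> p a}"

lemma Dia_ClPlus: "a \<in> Cl \<phi> \<Longrightarrow> Dia r a \<in> ClPlus \<phi>"
  unfolding ClPlus_def by blast

lemma H_atom: "is_atom \<phi> (H \<sigma> \<phi> p)"
proof -
  have phi: "\<phi> \<in> ClPlus \<phi>" using subfs_Cl Cl_ClPlus self_subfs by blast
  have ne: "H \<sigma> \<phi> p \<noteq> {}"
  proof (cases "holds \<sigma> p \<phi>")
    case True then show ?thesis using phi unfolding H_def by blast
  next
    case False then have "neg \<phi> \<in> H \<sigma> \<phi> p" using neg_ClPlus[OF phi] unfolding H_def by simp
    then show ?thesis by blast
  qed
  have c: "\<forall>a \<in> ClPlus \<phi>. a \<in> H \<sigma> \<phi> p \<longleftrightarrow> neg a \<notin> H \<sigma> \<phi> p"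
    using neg_ClPlus unfolding H_def by auto
  have o: "\<forall>a b. Or a b \<in> ClPlus \<phi> \<longrightarrow> (Or a b \<in> H \<sigma> \<phi> p \<longleftrightarrow> a \<in> H \<sigma> \<phi> p \<or> b \<in> H \<sigma> \<phi> p)"
  proof (intro allI impI)
    fix a b assume "Or a b \<in> ClPlus \<phi>"
    then have "Or a b \<in> subfs \<phi>" using Or_ClPlus by blast
    then have "a \<in> ClPlus \<phi>" "b \<in> ClPlus \<phi>" using Or_subfs subfs_Cl Cl_ClPlus by blast+
    then show "Or a b \<in> H \<sigma> \<phi> p \<longleftrightarrow> a \<in> H \<sigma> \<phi> p \<or> b \<in> H \<sigma> \<phi> p"
      using \<open>Or a b \<in> ClPlus \<phi>\<close> unfolding H_def by auto
  qed
  show ?thesis unfolding is_atom_def using ne c o unfolding H_def by blast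
qed

lemma H_Req: "a \<in> Req \<phi> r (H \<sigma> \<phi> p) \<longleftrightarrow> a \<in> Cl \<phi> \<and> (\<exists>J. is_point J \<and> irel r p J \<and> holds \<sigma> J a)"
  unfolding Req_def H_def using Dia_ClPlus by auto

lemma H_obs: "a \<in> obs \<phi> (H \<sigma> \<phi> p) \<longleftrightarrow> a \<in> Cl \<phi> \<and> holds \<sigma> p a"
  unfolding obs_def H_def using Cl_ClPlus by auto

lemma H_compass: "inf_compass \<phi> (H \<sigma> \<phi>)"
proof -
  have A: "leadsA \<phi> (H \<sigma> \<phi> p) (H \<sigma> \<phi> q)" if "is_point p" "is_point q" "irel RA p q" for p q
  proof -
    obtain x y where p: "p = (x,y)" by fastforce
    obtain y' z where q: "q = (y',z)" by fastforce
    have yy: "y' = y" "y < z" using that p q by (auto simp: is_point_def)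
    show ?thesis unfolding leadsA_def
    proof (intro set_eqI iffI)
      fix a assume "a \<in> Req \<phi> RA (H \<sigma> \<phi> p)"
      then obtain w where w: "a \<in> Cl \<phi>" "y < w" "holds \<sigma> (y,w) a" unfolding H_Req p by (auto simp: is_point_def)
      consider "w = z" | "w < z" | "z < w" by linarith
      then show "a \<in> obs \<phi> (H \<sigma> \<phi> q) \<union> Req \<phi> RB (H \<sigma> \<phi> q) \<union> Req \<phi> RBbar (H \<sigma> \<phi> q)"
      proof cases
        case 1 then show ?thesis using w unfolding Un_iff H_obs q yy by auto
      next
        case 2 then have "a \<in> Req \<phi> RB (H \<sigma> \<phi> q)" using w unfolding H_Req q yy
          by (auto simp: is_point_def intro!: exI[of _ "(y,w)"])
        then show ?thesis by blast
      next
        case 3 then have "a \<in> Req \<phi> RBbar (H \<sigma> \<phi> q)" using w unfolding H_Req q yy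
          by (auto simp: is_point_def intro!: exI[of _ "(y,w)"])
        then show ?thesis by blast
      qed
    next
      fix a assume "a \<in> obs \<phi> (H \<sigma> \<phi> q) \<union> Req \<phi> RB (H \<sigma> \<phi> q) \<union> Req \<phi> RBbar (H \<sigma> \<phi> q)"
      then have "\<exists>w. a \<in> Cl \<phi> \<and> y < w \<and> holds \<sigma> (y,w) a"
        unfolding Un_iff H_obs H_Req q yy(1) using yy by (auto simp: is_point_def)
      then obtain w where w: "a \<in> Cl \<phi>" "y < w" "holds \<sigma> (y,w) a" by blast
      then show "a \<in> Req \<phi> RA (H \<sigma> \<phi> p)" unfolding H_Req p
        by (auto simp: is_point_def intro!: exI[of _ "(y,w)"])
    qed
  qed
  have B: "leadsB \<phi> (H \<sigma> \<phi> p) (H \<sigma> \<phi> q)" if "is_point p" "is_point q" "irel RB p q" for p q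
  proof -
    obtain x y where p: "p = (x,y)" by fastforce
    obtain x' y' where q: "q = (x',y')" by fastforce
    have xx: "x' = x" "y' < y" "x < y'" using that p q by (auto simp: is_point_def)
    have ob: "\<And>a z. a \<in> obs \<phi> (H \<sigma> \<phi> (x,z)) \<longleftrightarrow> a \<in> Cl \<phi> \<and> holds \<sigma> (x,z) a" using H_obs by blast
    have rb: "\<And>a z. a \<in> Req \<phi> RB (H \<sigma> \<phi> (x,z)) \<longleftrightarrow> a \<in> Cl \<phi> \<and> (\<exists>w. x < w \<and> w < z \<and> holds \<sigma> (x,w) a)"
      unfolding H_Req by (auto simp: is_point_def)
    have rbb: "\<And>a z. a \<in> Req \<phi> RBbar (H \<sigma> \<phi> (x,z)) \<longleftrightarrow> a \<in> Cl \<phi> \<and> (\<exists>w. x < w \<and> z < w \<and> holds \<sigma> (x,w) a)"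
      unfolding H_Req by (auto simp: is_point_def)
    show ?thesis unfolding leadsB_def p q xx(1)
      apply (intro conjI subsetI)
      subgoal for a unfolding Un_iff ob rb rbb using xx by (metis less_trans)
      subgoal for a unfolding Un_iff ob rb rbb using xx by (metis linorder_neqE_nat)
      subgoal for a unfolding Un_iff ob rb rbb using xx by (metis less_trans)
      subgoal for a unfolding Un_iff ob rb rbb using xx by (metis linorder_neqE_nat)
      done
  qed
  have F: "\<exists>q. is_point q \<and> irel r p q \<and> a \<in> obs \<phi> (H \<sigma> \<phi> q)"
    if "is_point p" "a \<in> Req \<phi> r (H \<sigma> \<phi> p)" for p r a
    using that unfolding H_Req H_obs by blast
  show ?thesis unfolding inf_compass_def using H_atom A B F by blast
qed

lemma sat_to_W:
  assumes "inf_satisfiable \<phi>"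
  shows "\<exists>L y. inf_compass \<phi> L \<and> 0 < y \<and> \<phi> \<in> L (0,y)"
proof -
  obtain \<sigma> I where I: "is_point I" "holds \<sigma> I \<phi>" using assms unfolding inf_satisfiable_def by blast
  obtain x y where xy: "I = (x,y)" by fastforce
  define \<sigma>' where "\<sigma>' = (\<lambda>p. \<sigma> (fst p + x, snd p + x))"
  have "holds \<sigma>' (0, y - x) \<phi>" unfolding \<sigma>'_def holds_shift using I xy by (simp add: is_point_def)
  then have "\<phi> \<in> H \<sigma>' \<phi> (0, y - x)" unfolding H_def using subfs_Cl Cl_ClPlus self_subfs by blast
  moreover have "0 < y - x" using I xy by (simp add: is_point_def)
  ultimately show ?thesis using H_compass by blast
qed

lemma UNIV_rel: "(UNIV :: rel set) = {RA, RB, RBbar}"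
  using rel.exhaust by auto

lemma card_UNIV_rel: "card (UNIV :: rel set) = 3"
  unfolding UNIV_rel by simp

lemma finite_Cl[simp]: "finite (Cl \<phi>)" unfolding Cl_def by simp

lemma card_Cl: "card (Cl \<phi>) \<le> 2 * fsize \<phi>"
proof -
  have "card (Cl \<phi>) \<le> card (subfs \<phi>) + card (neg ` subfs \<phi>)" unfolding Cl_def by (rule card_Un_le)
  also have "\<dots> \<le> card (subfs \<phi>) + card (subfs \<phi>)" using card_image_le[OF finite_subfs, of neg \<phi>] by simp
  finally show ?thesis unfolding fsize_def by simp
qed

lemma fsize_pos: "0 < fsize \<phi>"
  unfolding fsize_def using self_subfs[of \<phi>] finite_subfs[of \<phi>] card_gt_0_iff by blast

definition Xset :: "'p fml \<Rightarrow> 'p fml set" where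
  "Xset \<phi> = subfs \<phi> \<union> (\<lambda>(r,a). Dia r a) ` (UNIV \<times> Cl \<phi>)"

lemma finite_ClPlus[simp]: "finite (ClPlus \<phi>)"
proof -
  have "{Dia r a |r a. a \<in> Cl \<phi>} = (\<lambda>(r,a). Dia r a) ` (UNIV \<times> Cl \<phi>)" by auto
  moreover have "{neg (Dia r a) |r a. a \<in> Cl \<phi>} = (\<lambda>(r,a). neg (Dia r a)) ` (UNIV \<times> Cl \<phi>)" by auto
  moreover have "finite (UNIV :: rel set)" unfolding UNIV_rel by simp
  ultimately show ?thesis unfolding ClPlus_def by simp
qed

lemma card_Xset: "card (Xset \<phi>) \<le> 7 * fsize \<phi>"
proof -
  have fU: "finite (UNIV :: rel set)" unfolding UNIV_rel by simp
  have c1: "card ((\<lambda>(r,a). Dia r a) ` ((UNIV :: rel set) \<times> Cl \<phi>)) \<le> card ((UNIV :: rel set) \<times> Cl \<phi>)"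
    by (rule card_image_le) (simp add: fU)
  have c2: "card ((UNIV :: rel set) \<times> Cl \<phi>) = 3 * card (Cl \<phi>)"
    using card_UNIV_rel card_cartesian_product by metis
  have "card (Xset \<phi>) \<le> card (subfs \<phi>) + card ((\<lambda>(r,a). Dia r a) ` ((UNIV :: rel set) \<times> Cl \<phi>))"
    unfolding Xset_def by (rule card_Un_le)
  then show ?thesis using c1 c2 card_Cl[of \<phi>] unfolding fsize_def by linarith
qed

lemma notX_neg: "e \<in> ClPlus \<phi> \<Longrightarrow> e \<notin> Xset \<phi> \<Longrightarrow> neg e \<in> Xset \<phi>"
proof -
  assume e: "e \<in> ClPlus \<phi>" "e \<notin> Xset \<phi>"
  have sX: "subfs \<phi> \<subseteq> Xset \<phi>" unfolding Xset_def by blast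
  have dX: "Dia r a \<in> Xset \<phi>" if "a \<in> Cl \<phi>" for r a unfolding Xset_def using that by force
  consider "e \<in> subfs \<phi>" | s where "e = neg s" "s \<in> subfs \<phi>"
    | r a where "e = Dia r a" "a \<in> Cl \<phi>" | r a where "e = neg (Dia r a)" "a \<in> Cl \<phi>"
    using e(1) unfolding ClPlus_def Cl_def by blast
  then show ?thesis
  proof cases
    case 1 then show ?thesis using e sX by blast
  next
    case 2
    show ?thesis
    proof (cases "\<exists>c. s = Neg c")
      case True
      then obtain c where "s = Neg c" by blast
      with 2 have "e \<in> subfs \<phi>" using Neg_subfs by auto
      then show ?thesis using e sX by blast
    next
      case False
      then have "neg s = Neg s" by (cases s) auto
      with 2 have "neg e = s" by simp
      then show ?thesis using 2 sX by blast
    qed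
  next
    case 3 then show ?thesis using e dX by blast
  next
    case 4 then show ?thesis using dX by simp
  qed
qed

lemma atoms_inj: "inj_on (\<lambda>F. F \<inter> Xset \<phi>) {F. is_atom \<phi> F}"
proof (rule inj_onI)
  fix F G assume F: "F \<in> {F. is_atom \<phi> F}" and G: "G \<in> {F. is_atom \<phi> F}"
    and eq: "F \<inter> Xset \<phi> = G \<inter> Xset \<phi>"
  have Fa: "is_atom \<phi> F" and Ga: "is_atom \<phi> G" using F G by auto
  have "e \<in> F \<longleftrightarrow> e \<in> G" if "e \<in> ClPlus \<phi>" for e
  proof (cases "e \<in> Xset \<phi>")
    case True then show ?thesis using eq by blast
  next
    case False
    then have n: "neg e \<in> Xset \<phi>" using notX_neg that by blast
    have "e \<in> F \<longleftrightarrow> neg e \<notin> F" using Fa that unfolding is_atom_def by blast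
    moreover have "e \<in> G \<longleftrightarrow> neg e \<notin> G" using Ga that unfolding is_atom_def by blast
    ultimately show ?thesis using eq n by blast
  qed
  moreover have "F \<subseteq> ClPlus \<phi>" "G \<subseteq> ClPlus \<phi>" using Fa Ga unfolding is_atom_def by auto
  ultimately show "F = G" by blast
qed

lemma finite_atoms[simp]: "finite {F. is_atom \<phi> F}"
proof -
  have "{F. is_atom \<phi> F} \<subseteq> Pow (ClPlus \<phi>)" unfolding is_atom_def by auto
  then show ?thesis using finite_subset by (metis finite_ClPlus finite_Pow_iff)
qed

lemma card_atoms: "card {F. is_atom \<phi> F} \<le> 2 ^ (7 * fsize \<phi>)"
proof -
  have fX: "finite (Xset \<phi>)" unfolding Xset_def using finite_ClPlus
    by (simp add: UNIV_rel)
  have "card {F. is_atom \<phi> F} = card ((\<lambda>F. F \<inter> Xset \<phi>) ` {F. is_atom \<phi> F})"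
    using atoms_inj card_image by metis
  also have "\<dots> \<le> card (Pow (Xset \<phi>))" by (rule card_mono) (auto simp: fX)
  also have "\<dots> = 2 ^ card (Xset \<phi>)" using fX card_Pow by blast
  also have "\<dots> \<le> 2 ^ (7 * fsize \<phi>)" using card_Xset by (intro power_increasing) auto
  finally show ?thesis .
qed

definition Kset :: "'p fml \<Rightarrow> 'p fml set \<Rightarrow> 'p fml set" where
  "Kset \<phi> F = obs \<phi> F \<union> Req \<phi> RB F \<union> Req \<phi> RBbar F"

lemma leadsB_trans: "leadsB \<phi> G F \<Longrightarrow> leadsB \<phi> F E \<Longrightarrow> leadsB \<phi> G E"
  unfolding leadsB_def by blast

lemma leadsB_K: "leadsB \<phi> G F \<Longrightarrow> Kset \<phi> G = Kset \<phi> F"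
  unfolding leadsB_def Kset_def by blast

lemma Req_Cl: "a \<in> Req \<phi> r F \<Longrightarrow> a \<in> Cl \<phi>" unfolding Req_def by blast

lemma stabilize:
  fixes f :: "nat \<Rightarrow> nat"
  assumes "\<And>j. f (Suc j) \<le> f j"
  shows "\<exists>J. \<forall>j\<ge>J. f j = f J"
proof -
  define m where "m = (LEAST v. v \<in> range f)"
  have "m \<in> range f" unfolding m_def by (rule LeastI) blast
  then obtain J where J: "f J = m" by blast
  have "f j = f J" if "j \<ge> J" for j
  proof -
    have "f j \<le> f J" using that assms by (induction j rule: dec_induct) (auto intro: order_trans)
    moreover have "m \<le> f j" unfolding m_def by (rule Least_le) blast
    ultimately show ?thesis using J by simp
  qed
  then show ?thesis by blast
qed

locale Wc =
  fixes \<phi> :: "'p fml" and L :: "nat \<times> nat \<Rightarrow> 'p fml set"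
  assumes C: "inf_compass \<phi> L"
begin

definition S :: "nat \<Rightarrow> 'p fml set set" where
  "S y = {L (c,y) | c. c < y}"

definition cm :: "nat \<Rightarrow> 'p fml set \<Rightarrow> nat" where
  "cm y F = (if \<exists>c<y. L (c,y) = F then LEAST c. c < y \<and> L (c,y) = F else 0)"

definition nxt :: "nat \<Rightarrow> 'p fml set \<Rightarrow> 'p fml set" where
  "nxt y F = L (cm y F, Suc y)"

definition birth :: "nat \<Rightarrow> 'p fml set" where
  "birth y = L (y, Suc y)"

fun Sh :: "nat \<Rightarrow> 'p fml set set" where
  "Sh 0 = {}"
| "Sh (Suc y) = nxt y ` Sh y \<union> {birth y}"

fun dyn :: "nat \<Rightarrow> 'p fml set \<Rightarrow> nat \<Rightarrow> 'p fml set" where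
  "dyn y F 0 = F"
| "dyn y F (Suc j) = nxt (y + j) (dyn y F j)"

lemma atomL: "x < y \<Longrightarrow> is_atom \<phi> (L (x,y))"
  using C unfolding inf_compass_def is_point_def by auto

lemma leadsB_L: "x < y' \<Longrightarrow> y' < y \<Longrightarrow> leadsB \<phi> (L (x,y)) (L (x,y'))"
  using C unfolding inf_compass_def is_point_def by auto

lemma leadsA_L: "x < y \<Longrightarrow> y < z \<Longrightarrow> leadsA \<phi> (L (x,y)) (L (y,z))"
  using C unfolding inf_compass_def is_point_def by auto

lemma fulfil: "x < y \<Longrightarrow> a \<in> Req \<phi> r (L (x,y)) \<Longrightarrow> \<exists>q. is_point q \<and> irel r (x,y) q \<and> a \<in> obs \<phi> (L q)"
  using C unfolding inf_compass_def is_point_def by auto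

lemma cm_prop: "F \<in> S y \<Longrightarrow> cm y F < y \<and> L (cm y F, y) = F"
proof -
  assume "F \<in> S y"
  then have ex: "\<exists>c<y. L (c,y) = F" unfolding S_def by blast
  then have "cm y F = (LEAST c. c < y \<and> L (c,y) = F)" unfolding cm_def by simp
  then show ?thesis using LeastI_ex[of "\<lambda>c. c < y \<and> L (c,y) = F"] ex by simp
qed

lemma cm_le: "c < y \<Longrightarrow> L (c,y) = F \<Longrightarrow> cm y F \<le> c"
proof -
  assume a: "c < y" "L (c,y) = F"
  then have "cm y F = (LEAST c. c < y \<and> L (c,y) = F)" unfolding cm_def by auto
  then show ?thesis using Least_le[of "\<lambda>c. c < y \<and> L (c,y) = F" c] a by simp
qed

lemma cm_lt: "cm y F < Suc y"
proof (cases "F \<in> S y")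
  case True then show ?thesis using cm_prop[of F y] by simp
next
  case False then have "\<not> (\<exists>c<y. L (c,y) = F)" unfolding S_def by blast
  then show ?thesis unfolding cm_def by auto
qed

lemma nxt_atom: "is_atom \<phi> (nxt y F)"
  unfolding nxt_def using atomL cm_lt by blast

lemma birth_atom: "is_atom \<phi> (birth y)"
  unfolding birth_def using atomL by simp

lemma S_atom: "F \<in> S y \<Longrightarrow> is_atom \<phi> F"
  unfolding S_def using atomL by blast

lemma nxt_S: "F \<in> S y \<Longrightarrow> nxt y F \<in> S (Suc y)"
  unfolding nxt_def using cm_prop[of F y] unfolding S_def by auto

lemma birth_S: "birth y \<in> S (Suc y)"
  unfolding birth_def S_def by auto

lemma Sh_S: "Sh y \<subseteq> S y"
  by (induction y) (auto simp: nxt_S birth_S)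

lemma Sh_atoms: "Sh y \<subseteq> {F. is_atom \<phi> F}"
  using Sh_S S_atom by blast

lemma Sh_ne: "Sh (Suc y) \<noteq> {}"
  by simp

lemma L2: "F \<in> S y \<Longrightarrow> leadsB \<phi> (nxt y F) F"
  using cm_prop[of F y] leadsB_L[of "cm y F" y "Suc y"] unfolding nxt_def by auto

lemma L3: "F \<in> S y \<Longrightarrow> Req \<phi> RB (nxt y F) \<subseteq> obs \<phi> F \<union> Req \<phi> RB F"
proof
  fix a assume F: "F \<in> S y" and a: "a \<in> Req \<phi> RB (nxt y F)"
  define c where "c = cm y F"
  have c: "c < y" "L (c,y) = F" using cm_prop[OF F] c_def by auto
  have "a \<in> Req \<phi> RB (L (c, Suc y))" using a unfolding nxt_def c_def .
  then have "\<exists>q. is_point q \<and> irel RB (c, Suc y) q \<and> a \<in> obs \<phi> (L q)"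
    using c by (intro fulfil) auto
  then obtain q where q: "is_point q" "irel RB (c, Suc y) q" "a \<in> obs \<phi> (L q)" by (elim exE conjE)
  obtain z where z: "q = (c,z)" "c < z" "z < Suc y"
    using q(1,2) by (cases q) (auto simp: is_point_def)
  show "a \<in> obs \<phi> F \<union> Req \<phi> RB F"
  proof (cases "z = y")
    case True then show ?thesis using q z c by auto
  next
    case False
    then have "leadsB \<phi> (L (c,y)) (L (c,z))" using leadsB_L z by auto
    then show ?thesis using q z c unfolding leadsB_def by auto
  qed
qed

lemma L4: "Req \<phi> RB (birth y) = {}"
proof (rule ccontr)
  assume "Req \<phi> RB (birth y) \<noteq> {}"
  then obtain a where "a \<in> Req \<phi> RB (L (y, Suc y))" unfolding birth_def by blast
  then have "\<exists>q. is_point q \<and> irel RB (y, Suc y) q \<and> a \<in> obs \<phi> (L q)"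
    by (intro fulfil) auto
  then obtain q where q: "is_point q" "irel RB (y, Suc y) q" by (elim exE conjE)
  then show False by (cases q) (auto simp: is_point_def)
qed

lemma L5: "F \<in> S y \<Longrightarrow> Req \<phi> RBbar F \<subseteq> obs \<phi> (nxt y F) \<union> Req \<phi> RBbar (nxt y F)"
proof
  fix a assume F: "F \<in> S y" and a: "a \<in> Req \<phi> RBbar F"
  define c where "c = cm y F"
  have c: "c < y" "L (c,y) = F" using cm_prop[OF F] c_def by auto
  have "a \<in> Req \<phi> RBbar (L (c, y))" using a c by simp
  then have "\<exists>q. is_point q \<and> irel RBbar (c, y) q \<and> a \<in> obs \<phi> (L q)"
    using c by (intro fulfil) auto
  then obtain q where q: "is_point q" "irel RBbar (c, y) q" "a \<in> obs \<phi> (L q)" by (elim exE conjE)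
  then obtain z where z: "q = (c,z)" "y < z"
    by (cases q) (auto simp: is_point_def)
  have n: "nxt y F = L (c, Suc y)" unfolding nxt_def c_def by simp
  show "a \<in> obs \<phi> (nxt y F) \<union> Req \<phi> RBbar (nxt y F)"
  proof (cases "z = Suc y")
    case True then show ?thesis using q z n by auto
  next
    case False
    then have "leadsB \<phi> (L (c,z)) (L (c,Suc y))" using leadsB_L z c by auto
    then show ?thesis using q z n unfolding leadsB_def by auto
  qed
qed

lemma L6: "F \<in> S y \<Longrightarrow> Req \<phi> RA F = Kset \<phi> (birth y)"
proof -
  assume "F \<in> S y"
  then obtain c where "c < y" "F = L (c,y)" unfolding S_def by blast
  then have "leadsA \<phi> F (birth y)" using leadsA_L unfolding birth_def by auto
  then show ?thesis unfolding leadsA_def Kset_def .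
qed

lemma dyn_S: "F \<in> S y \<Longrightarrow> dyn y F j \<in> S (y + j)"
  by (induction j) (auto simp: nxt_S)

lemma dyn_fair:
  assumes F: "F \<in> S y" and a: "a \<in> Req \<phi> RBbar F"
  shows "\<exists>k>0. a \<in> dyn y F k"
proof (rule ccontr)
  assume nw: "\<not> (\<exists>k>0. a \<in> dyn y F k)"
  define col where "col j = cm (y + j) (dyn y F j)" for j
  have colp: "col j < y + j \<and> L (col j, y + j) = dyn y F j" for j
    using cm_prop[OF dyn_S[OF F, of j]] unfolding col_def by simp
  have dsuc: "dyn y F (Suc j) = L (col j, Suc (y + j))" for j
    by (simp add: nxt_def col_def)
  have "col (Suc j) \<le> col j" for j
  proof -
    have "col j < Suc (y + j)" using colp[of j] by simp
    moreover have "col (Suc j) = cm (Suc (y + j)) (L (col j, Suc (y + j)))"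
      unfolding col_def[of "Suc j"] using dsuc[of j] by simp
    ultimately show ?thesis using cm_le[of "col j" "Suc (y + j)"] by simp
  qed
  then obtain J where J: "\<forall>j\<ge>J. col j = col J" using stabilize by blast
  have pend: "a \<in> Req \<phi> RBbar (dyn y F j)" for j
  proof (induction j)
    case 0 then show ?case using a by simp
  next
    case (Suc j)
    have e: "dyn y F (Suc j) = nxt (y+j) (dyn y F j)" by simp
    have "a \<in> obs \<phi> (dyn y F (Suc j)) \<union> Req \<phi> RBbar (dyn y F (Suc j))"
      unfolding e using L5[OF dyn_S[OF F, of j]] Suc.IH by blast
    moreover have "a \<notin> obs \<phi> (dyn y F (Suc j))" using nw unfolding obs_def by blast
    ultimately show ?case by blast
  qed
  have "a \<in> Req \<phi> RBbar (L (col J, y + J))" using pend[of J] colp[of J] by (elim conjE) (erule ssubst)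
  then have "\<exists>q. is_point q \<and> irel RBbar (col J, y + J) q \<and> a \<in> obs \<phi> (L q)"
    using colp[of J] by (intro fulfil) auto
  then obtain q where q: "is_point q" "irel RBbar (col J, y + J) q" "a \<in> obs \<phi> (L q)" by (elim exE conjE)
  obtain w where w: "q = (col J, w)" "y + J < w" using q(1,2) by (cases q) (auto simp: is_point_def)
  define k where "k = w - y"
  have k: "k > J" "w = y + k" using w unfolding k_def by auto
  have "dyn y F k = L (col J, y + k)"
  proof -
    obtain k' where k': "k = Suc k'" "k' \<ge> J" using k by (cases k) auto
    then have "col k' = col J" using J by blast
    then show ?thesis using dsuc[of k'] k' by (metis add_Suc_right)
  qed
  then have "a \<in> dyn y F k" using q(3) w(1) k(2) unfolding obs_def by auto
  moreover have "k > 0" using k by simp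
  ultimately show False using nw by blast
qed

end

definition valid_walk :: "(nat \<Rightarrow> 'x) \<Rightarrow> (nat \<Rightarrow> nat) \<Rightarrow> nat \<Rightarrow> bool" where
  "valid_walk Sh w L \<longleftrightarrow> (\<forall>j<L. Sh (Suc (w j)) = Sh (w (Suc j)))"

fun Useq :: "(nat \<Rightarrow> 'b \<Rightarrow> 'b) \<Rightarrow> (nat \<Rightarrow> nat) \<Rightarrow> 'b \<Rightarrow> nat \<Rightarrow> 'b" where
  "Useq \<delta> w U0 0 = U0"
| "Useq \<delta> w U0 (Suc k) = \<delta> (w k) (Useq \<delta> w U0 k)"

lemma Useq_cong: "(\<And>k. k < n \<Longrightarrow> w k = w' k) \<Longrightarrow> Useq \<delta> w U n = Useq \<delta> w' U n"
  by (induction n) auto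

lemma shorten_step:
  assumes fin: "finite Nd" and vw: "valid_walk Sh w L" and L1: "card Nd < L"
    and G: "G (Sh (w L)) (Useq \<delta> w U0 L)"
    and nd: "\<forall>j. 1 \<le> j \<and> j \<le> L \<longrightarrow> (Sh (w j), Useq \<delta> w U0 j) \<in> Nd"
  shows "\<exists>w' L'. w' 0 = w 0 \<and> valid_walk Sh w' L' \<and> 1 \<le> L' \<and> L' < L \<and>
     G (Sh (w' L')) (Useq \<delta> w' U0 L') \<and> (\<forall>j. 1 \<le> j \<and> j \<le> L' \<longrightarrow> (Sh (w' j), Useq \<delta> w' U0 j) \<in> Nd)"
proof -
  define f where "f j = (Sh (w j), Useq \<delta> w U0 j)" for j
  have "\<not> inj_on f {1..L}"
  proof
    assume inj: "inj_on f {1..L}"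
    have "f ` {1..L} \<subseteq> Nd" using nd unfolding f_def by auto
    then have "card (f ` {1..L}) \<le> card Nd" using fin card_mono by blast
    moreover have "card (f ` {1..L}) = L" using inj card_image by fastforce
    ultimately show False using L1 by simp
  qed
  then obtain i j where ij: "i \<in> {1..L}" "j \<in> {1..L}" "i \<noteq> j" "f i = f j"
    unfolding inj_on_def by blast
  obtain i j where ij: "1 \<le> i" "i < j" "j \<le> L" "f i = f j"
  proof (cases "i < j")
    case True then show ?thesis using that ij by auto
  next
    case False then show ?thesis using that[of j i] ij by auto
  qed
  define d where "d = j - i"
  have d: "j = i + d" "d \<ge> 1" using ij unfolding d_def by auto
  define w' where "w' k = (if k < i then w k else w (k + d))" for k
  define L' where "L' = L - d"
  have L': "i \<le> L'" "L' < L" "L' + d = L" using ij d unfolding L'_def by auto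
  have U1: "Useq \<delta> w' U0 k = Useq \<delta> w U0 k" if "k \<le> i" for k
    using that by (intro Useq_cong) (auto simp: w'_def)
  have Sij: "Sh (w i) = Sh (w j)" and Uij: "Useq \<delta> w U0 i = Useq \<delta> w U0 j"
    using ij(4) unfolding f_def by auto
  have U2: "Useq \<delta> w' U0 k = Useq \<delta> w U0 (k + d)" if "i \<le> k" for k
    using that
  proof (induction k rule: dec_induct)
    case base then show ?case using U1[of i] Uij d by simp
  next
    case (step k)
    then show ?case by (simp add: w'_def)
  qed
  have w'ge: "w' k = w (k + d)" if "i \<le> k" for k using that unfolding w'_def by simp
  have vw': "valid_walk Sh w' L'"
    unfolding valid_walk_def
  proof (intro allI impI)
    fix k assume k: "k < L'"
    consider "Suc k < i" | "Suc k = i" | "i \<le> k" by linarith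
    then show "Sh (Suc (w' k)) = Sh (w' (Suc k))"
    proof cases
      case 1 then show ?thesis using vw k L' unfolding valid_walk_def w'_def by auto
    next
      case 2
      then have "Sh (Suc (w k)) = Sh (w i)" using vw k L' unfolding valid_walk_def by auto
      then show ?thesis using 2 Sij d unfolding w'_def by auto
    next
      case 3
      then have "k + d < L" using k L' by simp
      then have "Sh (Suc (w (k + d))) = Sh (w (Suc (k + d)))" using vw unfolding valid_walk_def by blast
      then show ?thesis using 3 w'ge[of k] w'ge[of "Suc k"] by simp
    qed
  qed
  have nd': "\<forall>k. 1 \<le> k \<and> k \<le> L' \<longrightarrow> (Sh (w' k), Useq \<delta> w' U0 k) \<in> Nd"
  proof (intro allI impI)
    fix k assume k: "1 \<le> k \<and> k \<le> L'"
    show "(Sh (w' k), Useq \<delta> w' U0 k) \<in> Nd"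
    proof (cases "k < i")
      case True
      then show ?thesis using nd U1[of k] k L' unfolding w'_def by auto
    next
      case False
      then have "(Sh (w (k + d)), Useq \<delta> w U0 (k + d)) \<in> Nd" using nd k L' by auto
      then show ?thesis using w'ge[of k] U2[of k] False by simp
    qed
  qed
  have G': "G (Sh (w' L')) (Useq \<delta> w' U0 L')"
    using G w'ge[of L'] U2[of L'] L' by simp
  have "w' 0 = w 0" using ij unfolding w'_def by simp
  moreover have "1 \<le> L'" using L' ij by simp
  ultimately show ?thesis using vw' G' nd' L' by blast
qed

lemma shorten:
  assumes fin: "finite Nd"
  shows "valid_walk Sh w L \<Longrightarrow> 1 \<le> L \<Longrightarrow> G (Sh (w L)) (Useq \<delta> w U0 L) \<Longrightarrow>
    (\<forall>j. 1 \<le> j \<and> j \<le> L \<longrightarrow> (Sh (w j), Useq \<delta> w U0 j) \<in> Nd) \<Longrightarrow>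
    \<exists>w' L'. w' 0 = w 0 \<and> valid_walk Sh w' L' \<and> 1 \<le> L' \<and> L' \<le> card Nd \<and> G (Sh (w' L')) (Useq \<delta> w' U0 L')"
proof (induction L arbitrary: w rule: less_induct)
  case (less L)
  show ?case
  proof (cases "L \<le> card Nd")
    case True then show ?thesis using less.prems by blast
  next
    case False
    then obtain w' L' where w': "w' 0 = w 0" "valid_walk Sh w' L'" "1 \<le> L'" "L' < L"
      "G (Sh (w' L')) (Useq \<delta> w' U0 L')" "\<forall>j. 1 \<le> j \<and> j \<le> L' \<longrightarrow> (Sh (w' j), Useq \<delta> w' U0 j) \<in> Nd"
      using shorten_step[of Nd Sh w L G \<delta> U0] fin less.prems False by auto
    then show ?thesis using less.IH[of L' w'] by auto
  qed
qed

context Wc begin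

definition dl :: "'p fml \<Rightarrow> nat \<Rightarrow> 'p fml set set \<Rightarrow> 'p fml set set" where
  "dl a y U = {G \<in> nxt y ` U. a \<notin> G}"

definition U0 :: "'p fml \<Rightarrow> nat \<Rightarrow> 'p fml set set" where
  "U0 a y = {F \<in> Sh y. a \<in> Req \<phi> RBbar F}"

definition Atoms :: "'p fml set set" where
  "Atoms = {F. is_atom \<phi> F}"

definition Ndp :: "('p fml set set \<times> 'p fml set set) set" where
  "Ndp = (Pow Atoms - {{}}) \<times> Pow Atoms"

definition Nds :: "('p fml set set \<times> 'p fml set set) set" where
  "Nds = (Pow Atoms - {{}}) \<times> {{}}"

lemma finite_Atoms: "finite Atoms" unfolding Atoms_def by simp

lemma finite_Ndp: "finite Ndp" unfolding Ndp_def using finite_Atoms by simp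
lemma finite_Nds: "finite Nds" unfolding Nds_def using finite_Atoms by simp

lemma card_Nds: "card Nds = 2 ^ card Atoms - 1"
proof -
  have "card Nds = card (Pow Atoms - {{}})" unfolding Nds_def by (simp add: card_cartesian_product)
  also have "\<dots> = 2 ^ card Atoms - 1" using finite_Atoms by (simp add: card_Diff_singleton card_Pow)
  finally show ?thesis .
qed

lemma card_Ndp: "card Ndp = (2 ^ card Atoms - 1) * 2 ^ card Atoms"
proof -
  have "card Ndp = card (Pow Atoms - {{}}) * card (Pow Atoms)" unfolding Ndp_def by (simp add: card_cartesian_product)
  also have "\<dots> = (2 ^ card Atoms - 1) * 2 ^ card Atoms" using finite_Atoms by (simp add: card_Diff_singleton card_Pow)
  finally show ?thesis .
qed

lemma Sh_Atoms: "Sh y \<subseteq> Atoms" using Sh_atoms unfolding Atoms_def .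

lemma finite_Sh: "finite (Sh y)" by (induction y) auto

lemma inf_unbounded: "infinite (X::nat set) \<Longrightarrow> \<exists>n>m. n \<in> X"
  by (meson finite_atMost finite_subset atMost_iff not_le subsetI)

lemma Useq_sub:
  assumes vw: "valid_walk Sh w n" and j: "j \<le> n"
  shows "Useq (dl a) w (U0 a (w 0)) j \<subseteq> Sh (w j)"
  using j
proof (induction j)
  case 0 then show ?case unfolding U0_def by auto
next
  case (Suc j)
  have "dl a (w j) (Useq (dl a) w (U0 a (w 0)) j) \<subseteq> nxt (w j) ` Sh (w j)"
    using Suc unfolding dl_def by auto
  also have "\<dots> \<subseteq> Sh (Suc (w j))" by auto
  also have "\<dots> = Sh (w (Suc j))" using vw Suc.prems unfolding valid_walk_def by simp
  finally show ?case by simp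
qed

lemma nodes_Ndp:
  assumes vw: "valid_walk Sh w n"
  shows "\<forall>j. 1 \<le> j \<and> j \<le> n \<longrightarrow> (Sh (w j), Useq (dl a) w (U0 a (w 0)) j) \<in> Ndp"
proof (intro allI impI)
  fix j assume j: "1 \<le> j \<and> j \<le> n"
  then obtain j' where j': "j = Suc j'" by (cases j) auto
  have "Sh (w j) = Sh (Suc (w j'))" using vw j j' unfolding valid_walk_def by auto
  then have "Sh (w j) \<noteq> {}" by simp
  moreover have "Useq (dl a) w (U0 a (w 0)) j \<subseteq> Atoms" using Useq_sub[OF vw] j Sh_Atoms by blast
  ultimately show "(Sh (w j), Useq (dl a) w (U0 a (w 0)) j) \<in> Ndp"
    unfolding Ndp_def using Sh_Atoms by auto
qed

lemma Useq_straight: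
  "Useq (dl a) (\<lambda>j. z + j) U j \<subseteq> {dyn z F j | F. F \<in> U \<and> (\<forall>i. 0 < i \<and> i \<le> j \<longrightarrow> a \<notin> dyn z F i)}"
proof (induction j)
  case 0 then show ?case by auto
next
  case (Suc j)
  show ?case
  proof
    fix G assume "G \<in> Useq (dl a) (\<lambda>j. z + j) U (Suc j)"
    then obtain H where H: "H \<in> Useq (dl a) (\<lambda>j. z + j) U j" "G = nxt (z + j) H" "a \<notin> G"
      unfolding dl_def by auto
    then obtain F where F: "F \<in> U" "H = dyn z F j" "\<forall>i. 0 < i \<and> i \<le> j \<longrightarrow> a \<notin> dyn z F i"
      using Suc.IH by blast
    have "G = dyn z F (Suc j)" using H F by simp
    moreover have "\<forall>i. 0 < i \<and> i \<le> Suc j \<longrightarrow> a \<notin> dyn z F i"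
      using F(3) H(3) \<open>G = dyn z F (Suc j)\<close> le_Suc_eq by auto
    ultimately show "G \<in> {dyn z F (Suc j) | F. F \<in> U \<and> (\<forall>i. 0 < i \<and> i \<le> Suc j \<longrightarrow> a \<notin> dyn z F i)}"
      using F(1) by blast
  qed
qed

lemma phase:
  assumes infT: "infinite {y. Sh y = T}"
  shows "\<exists>w n. w 0 = z \<and> valid_walk Sh w n \<and> 1 \<le> n \<and> n \<le> card Ndp \<and> Sh (w n) = T
            \<and> Useq (dl a) w (U0 a z) n = {}"
proof -
  define kf where "kf F = (SOME k. 0 < k \<and> a \<in> dyn z F k)" for F
  have kf: "0 < kf F \<and> a \<in> dyn z F (kf F)" if "F \<in> U0 a z" for F
  proof -
    have "F \<in> S z" "a \<in> Req \<phi> RBbar F" using that Sh_S unfolding U0_def by auto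
    then have "\<exists>k>0. a \<in> dyn z F k" by (rule dyn_fair)
    then show ?thesis unfolding kf_def by (rule someI_ex[where P = "\<lambda>k. 0 < k \<and> a \<in> dyn z F k"]) 
  qed
  have "finite (kf ` U0 a z)" unfolding U0_def using finite_Sh by simp
  then obtain B where B: "\<forall>k \<in> kf ` U0 a z. k \<le> B" using finite_nat_set_iff_bounded_le by blast
  obtain b where b: "Sh b = T" "z + B < b" using inf_unbounded[OF infT] by blast
  define w where "w j = z + j" for j
  define n where "n = b - z"
  have vw: "valid_walk Sh w n" unfolding valid_walk_def w_def by simp
  have n1: "1 \<le> n" using b unfolding n_def by simp
  have wL: "Sh (w n) = T" using b unfolding w_def n_def by simp
  have w0: "w 0 = z" unfolding w_def by simp
  have emp: "Useq (dl a) w (U0 a z) n = {}"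
  proof -
    have "Useq (dl a) w (U0 a z) n \<subseteq> {dyn z F n | F. F \<in> U0 a z \<and> (\<forall>i. 0 < i \<and> i \<le> n \<longrightarrow> a \<notin> dyn z F i)}"
      using Useq_straight[of a z "U0 a z" n] unfolding w_def .
    moreover have "\<not> (\<forall>i. 0 < i \<and> i \<le> n \<longrightarrow> a \<notin> dyn z F i)" if "F \<in> U0 a z" for F
    proof -
      have "kf F \<le> B" using B that by blast
      then have "kf F \<le> n" using b unfolding n_def by simp
      then show ?thesis using kf[OF that] by blast
    qed
    ultimately show ?thesis by blast
  qed
  have nd: "\<forall>j. 1 \<le> j \<and> j \<le> n \<longrightarrow> (Sh (w j), Useq (dl a) w (U0 a z) j) \<in> Ndp"
    using nodes_Ndp[OF vw, of a] w0 by simp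
  have "\<exists>w' n'. w' 0 = w 0 \<and> valid_walk Sh w' n' \<and> 1 \<le> n' \<and> n' \<le> card Ndp \<and>
      (\<lambda>C U. C = T \<and> U = {}) (Sh (w' n')) (Useq (dl a) w' (U0 a z) n')"
    by (rule shorten[OF finite_Ndp vw n1 _ nd]) (simp add: wL emp)
  then show ?thesis using w0 by auto
qed

lemma stem:
  assumes infT: "infinite {y. Sh y = T}"
  shows "\<exists>w n. w 0 = 0 \<and> valid_walk Sh w n \<and> 1 \<le> n \<and> n \<le> card Nds \<and> Sh (w n) = T"
proof -
  obtain b where b: "Sh b = T" "0 < b" using inf_unbounded[OF infT] by blast
  define w where "w j = j" for j :: nat
  have vw: "valid_walk Sh w b" unfolding valid_walk_def w_def by simp
  have U: "Useq (\<lambda>_ U. U) w {} j = {}" for j :: nat by (induction j) auto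
  have nd: "\<forall>j. 1 \<le> j \<and> j \<le> b \<longrightarrow> (Sh (w j), Useq (\<lambda>_ U. U) w ({}::'p fml set set) j) \<in> Nds"
  proof (intro allI impI)
    fix j assume j: "1 \<le> j \<and> j \<le> b"
    then obtain j' where "j = Suc j'" by (cases j) auto
    then have "Sh (w j) \<noteq> {}" unfolding w_def by simp
    moreover have "Sh (w j) \<subseteq> Atoms" using Sh_Atoms by blast
    ultimately show "(Sh (w j), Useq (\<lambda>_ U. U) w ({}::'p fml set set) j) \<in> Nds"
      unfolding Nds_def using U[of j] by blast
  qed
  have "\<exists>w' n'. w' 0 = w 0 \<and> valid_walk Sh w' n' \<and> 1 \<le> n' \<and> n' \<le> card Nds \<and>
      (\<lambda>C U. C = T) (Sh (w' n')) (Useq (\<lambda>_ U. U) w' ({}::'p fml set set) n')"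
    by (rule shorten[OF finite_Nds vw _ _ nd]) (use b in \<open>simp_all add: w_def\<close>)
  then show ?thesis unfolding w_def by auto
qed

lemma loop:
  assumes infT: "infinite {y. Sh y = T}"
  shows "Sh z = T \<Longrightarrow> \<exists>w n. w 0 = z \<and> valid_walk Sh w n \<and> Sh (w n) = T \<and> length as \<le> n \<and> n \<le> length as * card Ndp
     \<and> (\<forall>a \<in> set as. \<exists>off len. 1 \<le> len \<and> off + len \<le> n \<and> Useq (dl a) (\<lambda>k. w (off + k)) (U0 a (w off)) len = {})"
proof (induction as arbitrary: z)
  case Nil
  have "valid_walk Sh (\<lambda>_. z) 0" unfolding valid_walk_def by simp
  then show ?case using Nil by (intro exI[of _ "\<lambda>_. z"] exI[of _ 0]) auto
next
  case (Cons a as)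
  obtain w1 n1 where w1: "w1 0 = z" "valid_walk Sh w1 n1" "1 \<le> n1" "n1 \<le> card Ndp" "Sh (w1 n1) = T"
    "Useq (dl a) w1 (U0 a z) n1 = {}" using phase[OF infT] by blast
  obtain w2 n2 where w2: "w2 0 = w1 n1" "valid_walk Sh w2 n2" "Sh (w2 n2) = T" "length as \<le> n2"
    "n2 \<le> length as * card Ndp"
    "\<forall>a \<in> set as. \<exists>off len. 1 \<le> len \<and> off + len \<le> n2 \<and> Useq (dl a) (\<lambda>k. w2 (off + k)) (U0 a (w2 off)) len = {}"
    using Cons.IH[OF w1(5)] by blast
  define w where "w k = (if k \<le> n1 then w1 k else w2 (k - n1))" for k
  have wge: "w k = w2 (k - n1)" if "n1 \<le> k" for k
    using that w2(1) unfolding w_def by (cases "k = n1") auto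
  have wle: "w k = w1 k" if "k \<le> n1" for k using that unfolding w_def by simp
  have vw: "valid_walk Sh w (n1 + n2)"
    unfolding valid_walk_def
  proof (intro allI impI)
    fix k assume k: "k < n1 + n2"
    show "Sh (Suc (w k)) = Sh (w (Suc k))"
    proof (cases "k < n1")
      case True then show ?thesis using w1(2) wle[of k] wle[of "Suc k"] unfolding valid_walk_def by auto
    next
      case False
      then have "k - n1 < n2" "Suc k - n1 = Suc (k - n1)" using k by auto
      then show ?thesis using w2(2) wge[of k] wge[of "Suc k"] False unfolding valid_walk_def by auto
    qed
  qed
  have fa: "\<exists>off len. 1 \<le> len \<and> off + len \<le> n1 + n2 \<and> Useq (dl b) (\<lambda>k. w (off + k)) (U0 b (w off)) len = {}"
    if b: "b \<in> set (a # as)" for b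
  proof (cases "b = a")
    case True
    have "w 0 = z" using wle w1(1) by simp
    moreover have "Useq (dl b) (\<lambda>k. w (0 + k)) U n1 = Useq (dl b) w1 U n1" for U
      using wle by (intro Useq_cong) auto
    ultimately have "Useq (dl b) (\<lambda>k. w (0 + k)) (U0 b (w 0)) n1 = Useq (dl b) w1 (U0 b z) n1" by simp
    then show ?thesis using w1 True by (intro exI[of _ 0] exI[of _ n1]) auto
  next
    case False
    then have "b \<in> set as" using b by simp
    then obtain off len where ol: "1 \<le> len" "off + len \<le> n2" "Useq (dl b) (\<lambda>k. w2 (off + k)) (U0 b (w2 off)) len = {}"
      using w2(6) by blast
    have "w (n1 + off) = w2 off" using wge by simp
    moreover have "Useq (dl b) (\<lambda>k. w (n1 + off + k)) U len = Useq (dl b) (\<lambda>k. w2 (off + k)) U len" for U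
      using wge by (intro Useq_cong) auto
    ultimately have "Useq (dl b) (\<lambda>k. w (n1 + off + k)) (U0 b (w (n1 + off))) len = Useq (dl b) (\<lambda>k. w2 (off + k)) (U0 b (w2 off)) len" by simp
    then show ?thesis using ol by (intro exI[of _ "n1 + off"] exI[of _ len]) auto
  qed
  have "w 0 = z" using wle w1(1) by simp
  moreover have "Sh (w (n1 + n2)) = T" using wge w2(3) by simp
  moreover have "length (a # as) \<le> n1 + n2" using w1(3) w2(4) by simp
  moreover have "n1 + n2 \<le> length (a # as) * card Ndp" using w1(4) w2(5) by simp
  ultimately show ?case using vw fa by blast
qed

end

context Wc begin

fun Lr :: "(nat \<Rightarrow> nat) \<Rightarrow> nat \<Rightarrow> nat \<Rightarrow> 'p fml set" where
  "Lr \<rho> x 0 = {}"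
| "Lr \<rho> x (Suc r) = (if x = r then birth (\<rho> r) else nxt (\<rho> r) (Lr \<rho> x r))"

definition good :: "(nat \<Rightarrow> nat) \<Rightarrow> bool" where
  "good \<rho> \<longleftrightarrow> \<rho> 0 = 0 \<and> (\<forall>r. Sh (Suc (\<rho> r)) = Sh (\<rho> (Suc r)))"

definition fair :: "(nat \<Rightarrow> nat) \<Rightarrow> bool" where
  "fair \<rho> \<longleftrightarrow> (\<forall>x z a. x < z \<longrightarrow> a \<in> Req \<phi> RBbar (Lr \<rho> x z) \<longrightarrow> (\<exists>z'>z. a \<in> Lr \<rho> x z'))"

lemma Lr_suc: "x < r \<Longrightarrow> Lr \<rho> x (Suc r) = nxt (\<rho> r) (Lr \<rho> x r)" by simp
lemma Lr_birth: "Lr \<rho> x (Suc x) = birth (\<rho> x)" by simp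

lemma content:
  assumes g: "good \<rho>"
  shows "{Lr \<rho> x r | x. x < r} = Sh (\<rho> r)"
proof (induction r)
  case 0 then show ?case using g unfolding good_def by simp
next
  case (Suc r)
  have "{Lr \<rho> x (Suc r) | x. x < Suc r} = insert (birth (\<rho> r)) (nxt (\<rho> r) ` {Lr \<rho> x r | x. x < r})"
    by (auto simp: less_Suc_eq)
  also have "\<dots> = Sh (Suc (\<rho> r))" using Suc by auto
  also have "\<dots> = Sh (\<rho> (Suc r))" using g unfolding good_def by blast
  finally show ?case .
qed

lemma Lr_in: "good \<rho> \<Longrightarrow> x < r \<Longrightarrow> Lr \<rho> x r \<in> Sh (\<rho> r)"
  using content by blast

lemma Lr_S: "good \<rho> \<Longrightarrow> x < r \<Longrightarrow> Lr \<rho> x r \<in> S (\<rho> r)"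
  using Lr_in Sh_S by blast

lemma Lr_leadsB:
  assumes g: "good \<rho>" and x: "x < z'"
  shows "z' < z \<Longrightarrow> leadsB \<phi> (Lr \<rho> x z) (Lr \<rho> x z')"
proof (induction z)
  case 0 then show ?case by simp
next
  case (Suc z)
  have xz: "x < z" using x Suc.prems by simp
  have l: "leadsB \<phi> (Lr \<rho> x (Suc z)) (Lr \<rho> x z)"
    using L2[OF Lr_S[OF g xz]] Lr_suc[OF xz] by simp
  show ?case
  proof (cases "z' = z")
    case True then show ?thesis using l by simp
  next
    case False then show ?thesis using Suc l leadsB_trans by (metis less_SucE)
  qed
qed

lemma Lr_K:
  assumes g: "good \<rho>" and x: "x < z"
  shows "Kset \<phi> (Lr \<rho> x z) = Kset \<phi> (birth (\<rho> x))"
proof (cases "z = Suc x")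
  case True then show ?thesis by simp
next
  case False
  then have "Suc x < z" using x by simp
  then have "leadsB \<phi> (Lr \<rho> x z) (Lr \<rho> x (Suc x))" using Lr_leadsB[OF g, of x "Suc x" z] by simp
  then show ?thesis using leadsB_K by simp
qed

lemma Lr_B:
  assumes g: "good \<rho>"
  shows "x < z \<Longrightarrow> a \<in> Req \<phi> RB (Lr \<rho> x z) \<Longrightarrow> \<exists>z'. x < z' \<and> z' < z \<and> a \<in> Lr \<rho> x z'"
proof (induction z)
  case 0 then show ?case by simp
next
  case (Suc z)
  show ?case
  proof (cases "x = z")
    case True then show ?thesis using Suc.prems L4 by simp
  next
    case False
    then have xz: "x < z" using Suc.prems by simp
    then have "a \<in> obs \<phi> (Lr \<rho> x z) \<union> Req \<phi> RB (Lr \<rho> x z)"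
      using L3[OF Lr_S[OF g xz]] Suc.prems Lr_suc[OF xz] by auto
    then show ?thesis
    proof
      assume "a \<in> obs \<phi> (Lr \<rho> x z)" then show ?thesis using xz unfolding obs_def by auto
    next
      assume "a \<in> Req \<phi> RB (Lr \<rho> x z)"
      then show ?thesis using Suc.IH xz by (meson less_SucI)
    qed
  qed
qed

lemma Lr_pend:
  assumes g: "good \<rho>" and x: "x < z" and a: "a \<in> Req \<phi> RBbar (Lr \<rho> x z)"
    and nw: "\<forall>z'>z. a \<notin> Lr \<rho> x z'"
  shows "z \<le> z' \<Longrightarrow> a \<in> Req \<phi> RBbar (Lr \<rho> x z')"
proof (induction z' rule: dec_induct)
  case base then show ?case using a .
next
  case (step k)
  have xk: "x < k" using x step by simp
  have "a \<in> obs \<phi> (Lr \<rho> x (Suc k)) \<union> Req \<phi> RBbar (Lr \<rho> x (Suc k))"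
    using L5[OF Lr_S[OF g xk]] step.IH Lr_suc[OF xk] by auto
  moreover have "a \<notin> Lr \<rho> x (Suc k)" using nw step(1) by (meson le_imp_less_Suc)
  then have "a \<notin> obs \<phi> (Lr \<rho> x (Suc k))" unfolding obs_def by blast
  ultimately show ?case by blast
qed

definition Lp :: "(nat \<Rightarrow> nat) \<Rightarrow> nat \<times> nat \<Rightarrow> 'p fml set" where
  "Lp \<rho> p = Lr \<rho> (fst p) (snd p)"

lemma Lp_compass:
  assumes g: "good \<rho>" and f: "fair \<rho>"
  shows "inf_compass \<phi> (Lp \<rho>)"
proof -
  have at: "is_atom \<phi> (Lp \<rho> p)" if "is_point p" for p
    using that Lr_S[OF g] S_atom unfolding Lp_def is_point_def by (cases p) auto
  have lA: "leadsA \<phi> (Lp \<rho> p) (Lp \<rho> q)" if "is_point p" "is_point q" "irel RA p q" for p q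
  proof -
    obtain x r where p: "p = (x,r)" by fastforce
    obtain r' z where q: "q = (r',z)" by fastforce
    have xr: "x < r" "r' = r" "r < z" using that p q by (auto simp: is_point_def)
    have "Req \<phi> RA (Lr \<rho> x r) = Kset \<phi> (birth (\<rho> r))" using L6[OF Lr_S[OF g xr(1)]] .
    also have "\<dots> = Kset \<phi> (Lr \<rho> r z)" using Lr_K[OF g xr(3)] by simp
    finally show ?thesis unfolding leadsA_def Lp_def p q xr(2) Kset_def by simp
  qed
  have lB: "leadsB \<phi> (Lp \<rho> p) (Lp \<rho> q)" if "is_point p" "is_point q" "irel RB p q" for p q
  proof -
    obtain x z where p: "p = (x,z)" by fastforce
    obtain x' z' where q: "q = (x',z')" by fastforce
    have "x' = x" "x < z'" "z' < z" using that p q by (auto simp: is_point_def)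
    then show ?thesis unfolding Lp_def p q using Lr_leadsB[OF g] by simp
  qed
  have ful: "\<exists>q. is_point q \<and> irel r p q \<and> a \<in> obs \<phi> (Lp \<rho> q)"
    if "is_point p" "a \<in> Req \<phi> r (Lp \<rho> p)" for p r a
  proof -
    obtain x z where p: "p = (x,z)" by fastforce
    have xz: "x < z" using that p by (auto simp: is_point_def)
    have aCl: "a \<in> Cl \<phi>" using that(2) Req_Cl by blast
    have a: "a \<in> Req \<phi> r (Lr \<rho> x z)" using that(2) p unfolding Lp_def by simp
    show ?thesis
    proof (cases r)
      case RA
      have "a \<in> Kset \<phi> (birth (\<rho> z))" using L6[OF Lr_S[OF g xz]] a RA by simp
      then consider "a \<in> obs \<phi> (birth (\<rho> z))" | "a \<in> Req \<phi> RBbar (Lr \<rho> z (Suc z))"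
        using L4 unfolding Kset_def by auto
      then show ?thesis
      proof cases
        case 1 then show ?thesis using RA p
          by (intro exI[of _ "(z, Suc z)"]) (auto simp: is_point_def Lp_def)
      next
        case 2 then obtain z' where "z' > Suc z" "a \<in> Lr \<rho> z z'" using f unfolding fair_def by blast
        then show ?thesis using RA aCl p
          by (intro exI[of _ "(z, z')"]) (auto simp: is_point_def Lp_def obs_def)
      qed
    next
      case RB
      then obtain z' where "x < z'" "z' < z" "a \<in> Lr \<rho> x z'" using Lr_B[OF g xz] a by blast
      then show ?thesis using RB aCl p
        by (intro exI[of _ "(x, z')"]) (auto simp: is_point_def Lp_def obs_def)
    next
      case RBbar
      then obtain z' where "z' > z" "a \<in> Lr \<rho> x z'" using f xz a unfolding fair_def by blast
      then show ?thesis using RBbar aCl xz p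
        by (intro exI[of _ "(x, z')"]) (auto simp: is_point_def Lp_def obs_def)
    qed
  qed
  show ?thesis unfolding inf_compass_def using at lA lB ful by blast
qed

end

context Wc begin

lemma Lp_periodic:
  assumes g: "good \<rho>" and per: "\<forall>r\<ge>y0. \<rho> (r + p) = \<rho> r"
  shows "\<exists>gg. periodic (Lp \<rho>) y0 p gg"
proof -
  have perm: "\<rho> r = \<rho> (r - p)" if "y0 + p \<le> r" for r
    using per[rule_format, of "r - p"] that by simp
  have i: "Lr \<rho> x y = Lr \<rho> (x - p) (y - p)" if "y0 + p \<le> x" "x < y" for x y
  proof -
    have "Suc x \<le> y" using that by simp
    then show ?thesis
    proof (induction y rule: dec_induct)
      case base
      have "Suc x - p = Suc (x - p)" using that by simp
      then show ?case using perm[OF that(1)] by simp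
    next
      case (step y)
      have e: "Suc y - p = Suc (y - p)" "x - p < y - p" "x < y" using that step by auto
      have "Lr \<rho> x (Suc y) = nxt (\<rho> y) (Lr \<rho> x y)" using Lr_suc[OF e(3)] .
      also have "\<dots> = nxt (\<rho> (y - p)) (Lr \<rho> (x - p) (y - p))" using step(3) perm[of y] that e by simp
      also have "\<dots> = Lr \<rho> (x - p) (Suc (y - p))" using Lr_suc[OF e(2)] by simp
      finally show ?case using e(1) by simp
    qed
  qed
  have ex: "\<exists>c<y0. Lr \<rho> c y0 = Lr \<rho> x (y0 + p)" if "x < y0 + p" for x
  proof -
    have "Lr \<rho> x (y0 + p) \<in> Sh (\<rho> (y0 + p))" using Lr_in[OF g that] .
    moreover have "\<rho> (y0 + p) = \<rho> y0" using per by blast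
    ultimately have "Lr \<rho> x (y0 + p) \<in> {Lr \<rho> c y0 | c. c < y0}" using content[OF g, of y0] by simp
    then obtain c where "c < y0" "Lr \<rho> x (y0 + p) = Lr \<rho> c y0" by blast
    then show ?thesis by metis
  qed
  define gg where "gg x = (if x < y0 + p then (SOME c. c < y0 \<and> Lr \<rho> c y0 = Lr \<rho> x (y0 + p)) else 0)" for x
  have ggp: "gg x < y0 \<and> Lr \<rho> (gg x) y0 = Lr \<rho> x (y0 + p)" if "x < y0 + p" for x
    using someI_ex[OF ex[OF that]] that unfolding gg_def by simp
  have ii: "Lr \<rho> x y = Lr \<rho> (gg x) (y - p)" if "x < y0 + p" "y0 + p \<le> y" for x y
    using that(2)
  proof (induction y rule: dec_induct)
    case base then show ?case using ggp[OF that(1)] by simp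
  next
    case (step y)
    have e: "Suc y - p = Suc (y - p)" "gg x < y - p" "x < y"
      using that step ggp[OF that(1)] by auto
    have "Lr \<rho> x (Suc y) = nxt (\<rho> y) (Lr \<rho> x y)" using Lr_suc[OF e(3)] .
    also have "\<dots> = nxt (\<rho> (y - p)) (Lr \<rho> (gg x) (y - p))" using step(3) perm[of y] step(1) by simp
    also have "\<dots> = Lr \<rho> (gg x) (Suc (y - p))" using Lr_suc[OF e(2)] by simp
    finally show ?case using e(1) by simp
  qed
  have "periodic (Lp \<rho>) y0 p gg"
    unfolding periodic_def Lp_def fst_conv snd_conv
  proof (intro conjI allI impI)
    fix x assume "x < y0 + p" then show "gg x < y0" using ggp by blast
  next
    fix x y assume "y0 + p \<le> x \<and> x < y" then show "Lr \<rho> x y = Lr \<rho> (x - p) (y - p)" using i by blast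
  next
    fix x y assume "x < y0 + p \<and> y0 + p \<le> y" then show "Lr \<rho> x y = Lr \<rho> (gg x) (y - p)" using ii by blast
  qed
  then show ?thesis by blast
qed

lemma loop_fair:
  assumes g: "good \<rho>" and p: "0 < p"
    and rl: "\<forall>r\<ge>y0. \<rho> r = lp ((r - y0) mod p)"
    and lf: "\<forall>a \<in> Cl \<phi>. \<exists>off len. 1 \<le> len \<and> off + len \<le> p \<and> Useq (dl a) (\<lambda>k. lp (off + k)) (U0 a (lp off)) len = {}"
  shows "fair \<rho>"
  unfolding fair_def
proof (intro allI impI)
  fix x z a assume xz: "x < z" and a: "a \<in> Req \<phi> RBbar (Lr \<rho> x z)"
  show "\<exists>z'>z. a \<in> Lr \<rho> x z'"
  proof (rule ccontr)
    assume nw0: "\<not> (\<exists>z'>z. a \<in> Lr \<rho> x z')"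
    then have nw: "\<forall>z'>z. a \<notin> Lr \<rho> x z'" by blast
    have "a \<in> Cl \<phi>" using a Req_Cl by blast
    then obtain off len where ol: "1 \<le> len" "off + len \<le> p"
      "Useq (dl a) (\<lambda>k. lp (off + k)) (U0 a (lp off)) len = {}" using lf by blast
    define s where "s = y0 + z * p + off"
    have "z * 1 \<le> z * p" using p by (intro mult_le_mono2) simp
    then have sz: "z \<le> s" unfolding s_def by linarith
    have rs: "\<rho> (s + j) = lp (off + j)" if "off + j < p" for j
    proof -
      have "s + j - y0 = (off + j) + z * p" unfolding s_def by simp
      then have "(s + j - y0) mod p = (off + j + z * p) mod p" by simp
      also have "\<dots> = off + j" using that by simp
      finally have m: "(s + j - y0) mod p = off + j" .
      have "y0 \<le> s + j" unfolding s_def by simp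
      then have "\<rho> (s + j) = lp ((s + j - y0) mod p)" using rl by blast
      then show ?thesis using m by simp
    qed
    have inv: "Lr \<rho> x (s + j) \<in> Useq (dl a) (\<lambda>k. lp (off + k)) (U0 a (lp off)) j" if "j \<le> len" for j
      using that
    proof (induction j)
      case 0
      have "x < s" using xz sz by simp
      then have "Lr \<rho> x s \<in> Sh (\<rho> s)" using Lr_in[OF g] by blast
      moreover have "\<rho> s = lp off" using rs[of 0] ol by simp
      moreover have "a \<in> Req \<phi> RBbar (Lr \<rho> x s)" using Lr_pend[OF g xz a nw sz] .
      ultimately show ?case unfolding U0_def by simp
    next
      case (Suc j)
      have xs: "x < s + j" using xz sz by simp
      have jl: "off + j < p" using Suc.prems ol by simp
      have IH: "Lr \<rho> x (s + j) \<in> Useq (dl a) (\<lambda>k. lp (off + k)) (U0 a (lp off)) j"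
        using Suc.IH Suc.prems by simp
      have "Lr \<rho> x (s + Suc j) = nxt (lp (off + j)) (Lr \<rho> x (s + j))"
        using Lr_suc[OF xs] rs[OF jl] by simp
      moreover have "z < s + Suc j" using sz by simp
      then have "a \<notin> Lr \<rho> x (s + Suc j)" using nw by blast
      ultimately have "Lr \<rho> x (s + Suc j) \<in> dl a (lp (off + j)) (Useq (dl a) (\<lambda>k. lp (off + k)) (U0 a (lp off)) j)"
        using IH unfolding dl_def by (simp only: mem_Collect_eq image_iff) blast
      then show ?case by simp
    qed
    show False using inv[of len] ol by simp
  qed
qed

lemma Lp_features:
  assumes g: "good \<rho>" and f: "fair \<rho>" and ph: "\<phi> \<in> Kset \<phi> (birth 0)"
  shows "features (Lp \<rho>) \<phi>"
proof -
  have b: "Lr \<rho> 0 1 = birth 0" using g unfolding good_def by simp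
  have "\<phi> \<in> obs \<phi> (Lr \<rho> 0 1) \<or> \<phi> \<in> Req \<phi> RBbar (Lr \<rho> 0 1)" using ph L4 b unfolding Kset_def by auto
  then have "\<exists>z. 0 < z \<and> \<phi> \<in> Lr \<rho> 0 z"
  proof
    assume "\<phi> \<in> obs \<phi> (Lr \<rho> 0 1)" then show ?thesis unfolding obs_def by auto
  next
    assume "\<phi> \<in> Req \<phi> RBbar (Lr \<rho> 0 1)"
    then obtain z where z: "z > 1" "\<phi> \<in> Lr \<rho> 0 z" using f unfolding fair_def by blast
    then have "0 < z" by simp
    then show ?thesis using z(2) by blast
  qed
  then show ?thesis unfolding features_def Lp_def is_point_def by force
qed

lemma ex_recurrent: "\<exists>T. infinite {y. Sh y = T}"
proof -
  have "finite (Sh ` UNIV)"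
  proof (rule finite_subset)
    show "Sh ` UNIV \<subseteq> Pow Atoms" using Sh_Atoms by auto
  qed (simp add: finite_Atoms)
  then obtain a0 where "infinite {a \<in> UNIV. Sh a = Sh a0}" using pigeonhole_infinite[of "UNIV :: nat set" Sh] by auto
  then show ?thesis by auto
qed

lemma main_construction:
  assumes ph: "\<phi> \<in> Kset \<phi> (birth 0)"
  shows "\<exists>Lx y0 p gg. inf_compass \<phi> Lx \<and> periodic Lx y0 p gg \<and> features Lx \<phi> \<and> 0 < p
      \<and> y0 \<le> card Nds \<and> p \<le> card (Cl \<phi>) * card Ndp"
proof -
  obtain T where infT: "infinite {y. Sh y = T}" using ex_recurrent by blast
  obtain ws y0 where ws: "ws 0 = 0" "valid_walk Sh ws y0" "1 \<le> y0" "y0 \<le> card Nds" "Sh (ws y0) = T"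
    using stem[OF infT] by blast
  obtain as where as: "set as = Cl \<phi>" "distinct as" using finite_distinct_list[OF finite_Cl] by blast
  obtain lp p where lp: "lp 0 = ws y0" "valid_walk Sh lp p" "Sh (lp p) = T" "length as \<le> p" "p \<le> length as * card Ndp"
     "\<forall>a \<in> set as. \<exists>off len. 1 \<le> len \<and> off + len \<le> p \<and> Useq (dl a) (\<lambda>k. lp (off + k)) (U0 a (lp off)) len = {}"
    using loop[OF infT ws(5)] by blast
  have las: "length as = card (Cl \<phi>)" using as distinct_card by metis
  have p0: "0 < p"
  proof -
    have "\<phi> \<in> Cl \<phi>" using subfs_Cl self_subfs by blast
    then have "0 < card (Cl \<phi>)" using card_gt_0_iff finite_Cl by blast
    then show ?thesis using lp(4) las by simp
  qed
  define \<rho> where "\<rho> r = (if r < y0 then ws r else lp ((r - y0) mod p))" for r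
  have g: "good \<rho>" unfolding good_def
  proof (intro conjI allI)
    show "\<rho> 0 = 0" using ws unfolding \<rho>_def by simp
  next
    fix r
    consider "Suc r < y0" | "Suc r = y0" | "y0 \<le> r" by linarith
    then show "Sh (Suc (\<rho> r)) = Sh (\<rho> (Suc r))"
    proof cases
      case 1 then show ?thesis using ws(2) unfolding valid_walk_def \<rho>_def by auto
    next
      case 2
      then have "Sh (Suc (ws r)) = Sh (ws y0)" using ws(2) unfolding valid_walk_def by auto
      then show ?thesis using 2 lp(1) unfolding \<rho>_def by auto
    next
      case 3
      define j where "j = (r - y0) mod p"
      have jp: "j < p" unfolding j_def using p0 by simp
      have e: "(Suc r - y0) mod p = (if Suc j = p then 0 else Suc j)"
        unfolding j_def using 3 mod_Suc[of "r - y0" p] by (simp add: Suc_diff_le)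
      have r1: "\<rho> r = lp j" "\<rho> (Suc r) = lp ((Suc r - y0) mod p)" using 3 unfolding \<rho>_def j_def by auto
      show ?thesis
      proof (cases "Suc j = p")
        case True
        then have "Sh (Suc (lp j)) = Sh (lp p)" using lp(2) unfolding valid_walk_def by auto
        then show ?thesis using r1 e True lp(1,3) ws(5) by simp
      next
        case False
        then have "Suc j < p" using jp by simp
        then have "Sh (Suc (lp j)) = Sh (lp (Suc j))" using lp(2) unfolding valid_walk_def by auto
        then show ?thesis using r1 e False by simp
      qed
    qed
  qed
  have rl: "\<forall>r\<ge>y0. \<rho> r = lp ((r - y0) mod p)" unfolding \<rho>_def using ws(3) by auto
  have per: "\<forall>r\<ge>y0. \<rho> (r + p) = \<rho> r"
  proof (intro allI impI)
    fix r assume "y0 \<le> r"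
    then have "r + p - y0 = (r - y0) + p" by simp
    then have "(r + p - y0) mod p = (r - y0) mod p" by simp
    then show "\<rho> (r + p) = \<rho> r" using rl \<open>y0 \<le> r\<close> by simp
  qed
  have f: "fair \<rho>" using loop_fair[OF g p0 rl] lp(6) as(1) by blast
  obtain gg where "periodic (Lp \<rho>) y0 p gg" using Lp_periodic[OF g per] by blast
  moreover have "inf_compass \<phi> (Lp \<rho>)" using Lp_compass[OF g f] .
  moreover have "features (Lp \<rho>) \<phi>" using Lp_features[OF g f ph] .
  moreover have "p \<le> card (Cl \<phi>) * card Ndp" using lp(5) las by simp
  ultimately show ?thesis using p0 ws(4) by blast
qed

end

lemma sat_to_periodic:
  assumes "inf_satisfiable \<phi>"
  shows "\<exists>L y0 yp g. inf_compass \<phi> L \<and> periodic L y0 yp g \<and> features L \<phi> \<and> 0 < yp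
       \<and> y0 < 2 ^ 2 ^ (7 * fsize \<phi>)
       \<and> yp < 2 * fsize \<phi> * 2 ^ 2 ^ (7 * fsize \<phi>) * 2 ^ 2 ^ (7 * fsize \<phi>)"
proof -
  obtain L0 y where L0: "inf_compass \<phi> L0" "0 < y" "\<phi> \<in> L0 (0,y)" using sat_to_W[OF assms] by blast
  interpret Wc \<phi> L0 using L0(1) by unfold_locales
  have phCl: "\<phi> \<in> Cl \<phi>" using subfs_Cl self_subfs by blast
  have ph: "\<phi> \<in> Kset \<phi> (birth 0)"
  proof (cases "y = 1")
    case True then show ?thesis using L0 phCl unfolding Kset_def birth_def obs_def by simp
  next
    case False
    then have "leadsB \<phi> (L0 (0,y)) (L0 (0,1))" using leadsB_L L0(2) by simp
    then show ?thesis using L0 phCl unfolding Kset_def birth_def obs_def leadsB_def by auto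
  qed
  obtain Lx y0 p gg where c: "inf_compass \<phi> Lx" "periodic Lx y0 p gg" "features Lx \<phi>" "0 < p"
    "y0 \<le> card Nds" "p \<le> card (Cl \<phi>) * card Ndp" using main_construction[OF ph] by blast
  define M where "M = card Atoms"
  define N :: nat where "N = 2 ^ 2 ^ (7 * fsize \<phi>)"
  have M: "M \<le> 2 ^ (7 * fsize \<phi>)" unfolding M_def Atoms_def using card_atoms .
  have MN: "2 ^ M \<le> N" unfolding N_def using M by (intro power_increasing) auto
  have pos: "0 < (2::nat) ^ M" by simp
  have "y0 < N" using c(5) card_Nds MN pos unfolding M_def by linarith
  moreover have "p < 2 * fsize \<phi> * N * N"
  proof -
    have "card Ndp = (2 ^ M - 1) * 2 ^ M" using card_Ndp unfolding M_def .
    also have "\<dots> < 2 ^ M * 2 ^ M" using pos by simp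
    also have "\<dots> \<le> N * N" using MN by (intro mult_mono) auto
    finally have a: "card Ndp < N * N" .
    have "p \<le> card (Cl \<phi>) * card Ndp" using c(6) .
    also have "\<dots> \<le> 2 * fsize \<phi> * card Ndp" using card_Cl by (intro mult_right_mono) auto
    also have "\<dots> < 2 * fsize \<phi> * (N * N)" using a fsize_pos by simp
    finally show ?thesis by (simp add: mult.assoc)
  qed
  ultimately show ?thesis using c unfolding N_def by blast
qed

theorem theorem2:
  fixes \<phi> :: "'p fml"
  shows "inf_satisfiable \<phi> \<longleftrightarrow>
    (\<exists>L y0 yp g. inf_compass \<phi> L \<and> periodic L y0 yp g \<and> features L \<phi> \<and> 0 < yp
       \<and> y0 < 2 ^ 2 ^ (7 * fsize \<phi>)
       \<and> yp < 2 * fsize \<phi> * 2 ^ 2 ^ (7 * fsize \<phi>) * 2 ^ 2 ^ (7 * fsize \<phi>))"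
  using sat_to_periodic compass_to_sat by blast

end
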